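(* For real numbers $Q_1,Q_2,\dots$ let $A_n$ be the adjacency matrix of the path on $n$ vertices $1,2,\dots,n$, let $H_n = A_n + \mathrm{diag}(Q_1,\dots,Q_n)$ and $p_n = p_n(x;Q_1,\dots,Q_n) = \det(xI_n - H_n)$ (with $p_0 = 1$, $p_{-1}=0$). Let $L_{2n}$ be the characteristic polynomial of $A_{2n} + \mathrm{diag}(Q_1,\dots,Q_n,Q_n,\dots,Q_1)$ and $L_{2n+1}$ that of $A_{2n+1} + \mathrm{diag}(Q_1,\dots,Q_n,Q_{n+1},Q_n,\dots,Q_1)$. Then (1) $p_n(x;Q_1,\dots,Q_n) = (x-Q_n)\,p_{n-1}(x;Q_1,\dots,Q_{n-1}) - p_{n-2}(x;Q_1,\dots,Q_{n-2})$; (2) $L_{2n} = (p_n + p_{n-1})(p_n - p_{n-1})$; (3) $L_{2n+1} = p_n\,(p_{n+1} - p_{n-1})$, where $p_{n+1} = p_{n+1}(x;Q_1,\dots,Q_{n+1})$. Moreover, in each of the factorizations (2) and (3), the roots of the first factor are eigenvalues of the corresponding symmetric-potential path Hamiltonian with eigenvectors $f$ satisfying $f(1) = -f(N) \neq 0$, and the roots of the second factor are eigenvalues with eigenvectors $f$ satisfying $f(1) = f(N)\neq 0$, where $N\in\{2n,2n+1\}$ is the last vertex of the path.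
   Context: Vertices of the path on $N$ vertices are labeled $1,\dots,N$ in order, so $1$ and $N$ are the endpoints. *)

theory Defs
  imports "Jordan_Normal_Form.Char_Poly"
begin

text \<open>Vertices 1..n of the path are stored 0-indexed: vertex k is index k-1.
  The potential Q is a function nat => real with Q k = Q_k (k >= 1).\<close>

definition path_adj :: "nat \<Rightarrow> real mat" where
  "path_adj n = mat n n (\<lambda>(i,j). if i + 1 = j \<or> j + 1 = i then 1 else 0)"

definition path_ham :: "nat \<Rightarrow> (nat \<Rightarrow> real) \<Rightarrow> real mat" where
  "path_ham n Q = path_adj n + mat n n (\<lambda>(i,j). if i = j then Q (i + 1) else 0)"

definition path_poly :: "(nat \<Rightarrow> real) \<Rightarrow> int \<Rightarrow> real poly" where
  "path_poly Q k = (if k < 0 then 0 else char_poly (path_ham (nat k) Q))"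

text \<open>Symmetric potential on the path with N vertices: vertex k gets Q_(min k (N+1-k)),
  i.e. (Q_1..Q_n,Q_n..Q_1) for N = 2n and (Q_1..Q_n,Q_(n+1),Q_n..Q_1) for N = 2n+1.\<close>
definition sym_ham :: "nat \<Rightarrow> (nat \<Rightarrow> real) \<Rightarrow> real mat" where
  "sym_ham N Q = path_ham N (\<lambda>k. Q (min k (N + 1 - k)))"

end

theory Submission
  imports Defs
begin

fun cont :: "(nat \<Rightarrow> 'a::comm_ring_1) \<Rightarrow> nat \<Rightarrow> nat \<Rightarrow> 'a" where
  "cont a s 0 = 1"
| "cont a s (Suc 0) = a s"
| "cont a s (Suc (Suc k)) = a (s + Suc k) * cont a s (Suc k) - cont a s k"

lemma cont_split:
  assumes "i \<ge> 1"
  shows "cont a s (i + Suc j) = cont a s i * cont a (s+i) (Suc j) - cont a s (i-1) * cont a (s+i+1) j"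
proof (induction j rule: less_induct)
  case (less j)
  show ?case
  proof (cases j)
    case 0
    from assms obtain i' where i: "i = Suc i'" by (cases i) auto
    show ?thesis using 0 i by (cases i') (auto simp: algebra_simps)
  next
    case (Suc j1)
    note IH1 = less[of j1]
    from assms obtain i' where i: "i = Suc i'" by (cases i) auto
    have L: "cont a s (i + Suc j) = a (s + i + j) * cont a s (i + j) - cont a s (i + j1)"
      using Suc i by (simp add: add.commute add.left_commute)
    show ?thesis
    proof (cases j1)
      case 0
      show ?thesis using L IH1 Suc 0 i by (cases i') (auto simp: algebra_simps)
    next
      case (Suc j2)
      note IH2 = less[of j2]
      have R1: "cont a (s+i) (Suc j) = a (s+i+j) * cont a (s+i) j - cont a (s+i) j1"
        using \<open>j = Suc j1\<close> by (simp add: add.commute add.left_commute)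
      have R2: "cont a (s+i+1) j = a (s+i+j) * cont a (s+i+1) j1 - cont a (s+i+1) j2"
        using \<open>j = Suc j1\<close> Suc by (simp add: add.commute add.left_commute)
      have X: "cont a s (i+j) = cont a s i * cont a (s+i) j - cont a s (i-1) * cont a (s+i+1) j1"
        using IH1 \<open>j = Suc j1\<close> by simp
      have Y: "cont a s (i+j1) = cont a s i * cont a (s+i) j1 - cont a s (i-1) * cont a (s+i+1) j2"
        using IH2 \<open>j = Suc j1\<close> Suc by simp
      show ?thesis unfolding L R1 R2 X Y by (simp add: algebra_simps del: cont.simps)
    qed
  qed
qed

lemma cont_front:
  "cont a s (Suc (Suc k)) = a s * cont a (Suc s) (Suc k) - cont a (s+2) k"
  using cont_split[of 1 a s k] by simp

lemma cont_cong:
  "(\<And>i. s \<le> i \<Longrightarrow> i < s + k \<Longrightarrow> a i = b i) \<Longrightarrow> cont a s k = cont b s k"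
  by (induction a s k rule: cont.induct) auto

lemma cont_rev:
  "s + k \<le> Suc c \<Longrightarrow> cont a s k = cont (\<lambda>i. a (c - i)) (Suc c - (s+k)) k"
proof (induction k arbitrary: s rule: less_induct)
  case (less k)
  show ?case
  proof (cases k)
    case 0 then show ?thesis by simp
  next
    case (Suc k1)
    show ?thesis
    proof (cases k1)
      case 0 then show ?thesis using Suc less.prems by simp
    next
      case (Suc k2)
      define t where "t = Suc c - (s + k)"
      have "cont a s k = a s * cont a (Suc s) (Suc k2) - cont a (s+2) k2"
        using \<open>k = Suc k1\<close> Suc cont_front by simp
      also have "cont a (Suc s) (Suc k2) = cont (\<lambda>i. a (c - i)) t (Suc k2)"
        using less.IH[of "Suc k2" "Suc s"] less.prems \<open>k = Suc k1\<close> Suc t_def by simp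
      also have "cont a (s+2) k2 = cont (\<lambda>i. a (c - i)) t k2"
        using less.IH[of "k2" "s+2"] less.prems \<open>k = Suc k1\<close> Suc t_def by simp
      also have "a s = a (c - (t + Suc k2))"
        using less.prems \<open>k = Suc k1\<close> Suc t_def by (intro arg_cong[where f=a]) simp
      finally show ?thesis using \<open>k = Suc k1\<close> Suc t_def by simp
    qed
  qed
qed


definition T :: "nat \<Rightarrow> (nat \<Rightarrow> 'a::comm_ring_1) \<Rightarrow> 'a mat" where
  "T k d = mat k k (\<lambda>(i,j). if i = j then d i else if i + 1 = j \<or> j + 1 = i then -1 else 0)"

lemma T_carrier[simp]: "T k d \<in> carrier_mat k k" by (simp add: T_def)

lemma T_delete_last: "mat_delete (T (Suc k) d) k k = T k d"
  by (rule eq_matI) (auto simp: T_def mat_delete_def)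

lemma det_T_rec: "det (T (Suc (Suc k)) d) = d (Suc k) * det (T (Suc k) d) - det (T k d)"
proof -
  define M where "M = T (Suc (Suc k)) d"
  have M: "M \<in> carrier_mat (Suc (Suc k)) (Suc (Suc k))" by (simp add: M_def)
  have "det M = (\<Sum>j<Suc (Suc k). M $$ (Suc k, j) * cofactor M (Suc k) j)"
    by (rule laplace_expansion_row[OF M]) simp
  also have "\<dots> = M $$ (Suc k, Suc k) * cofactor M (Suc k) (Suc k) + M $$ (Suc k, k) * cofactor M (Suc k) k
      + (\<Sum>j<k. M $$ (Suc k, j) * cofactor M (Suc k) j)"
    by (simp add: algebra_simps)
  also have "(\<Sum>j<k. M $$ (Suc k, j) * cofactor M (Suc k) j) = 0"
    by (intro sum.neutral) (auto simp: M_def T_def)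
  also have "M $$ (Suc k, Suc k) = d (Suc k)" by (simp add: M_def T_def)
  also have "M $$ (Suc k, k) = -1" by (simp add: M_def T_def)
  also have "cofactor M (Suc k) (Suc k) = det (T (Suc k) d)"
    using T_delete_last[of "Suc k" d] by (simp add: cofactor_def M_def)
  also have "cofactor M (Suc k) k = det (T k d)"
  proof -
    define D where "D = mat_delete M (Suc k) k"
    have D: "D \<in> carrier_mat (Suc k) (Suc k)" unfolding D_def using mat_delete_carrier[OF M] by simp
    have "det D = (\<Sum>i<Suc k. D $$ (i, k) * cofactor D i k)"
      by (rule laplace_expansion_column[OF D]) simp
    also have "\<dots> = D $$ (k, k) * cofactor D k k + (\<Sum>i<k. D $$ (i, k) * cofactor D i k)"
      by simp
    also have "(\<Sum>i<k. D $$ (i, k) * cofactor D i k) = 0"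
      by (intro sum.neutral) (auto simp: D_def M_def T_def mat_delete_def)
    also have "D $$ (k, k) = -1" by (simp add: D_def M_def T_def mat_delete_def)
    finally have dD: "det D = - cofactor D k k" by simp
    have "mat_delete D k k = T k d"
      by (rule eq_matI) (auto simp: D_def M_def T_def mat_delete_def)
    with dD have "det D = - det (T k d)" by (simp add: cofactor_def)
    then show ?thesis by (simp add: cofactor_def D_def)
  qed
  finally show ?thesis by (simp add: M_def)
qed

lemma det_T_cont: "det (T k d) = cont d 0 k"
proof (induction d "0::nat" k rule: cont.induct)
  case (1 a) then show ?case by (simp add: T_def det_def)
next
  case (2 a)
  have "T 1 a = mat 1 1 (\<lambda>_. a 0)" by (rule eq_matI) (auto simp: T_def)
  then show ?case by (simp add: det_def)
next
  case (3 a k) then show ?case by (simp add: det_T_rec)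
qed

lemma char_poly_path: "char_poly (path_ham k V) = cont (\<lambda>i. [:- V (Suc i), 1:]) 0 k"
proof -
  have "char_poly_matrix (path_ham k V) = T k (\<lambda>i. [:- V (Suc i), 1:])"
    by (rule eq_matI) (auto simp: char_poly_matrix_def path_ham_def path_adj_def T_def)
  then show ?thesis by (simp add: char_poly_def det_T_cont)
qed


lemma path_ham_mult:
  assumes "i < N"
  shows "(path_ham N V *\<^sub>v vec N g) $ i =
    (if i = 0 then 0 else g (i-1)) + (if Suc i < N then g (Suc i) else 0) + V (Suc i) * g i"
proof -
  have "(path_ham N V *\<^sub>v vec N g) $ i =
     (\<Sum>j\<in>{0..<N}. (if j = i - 1 \<and> 0 < i then g j else 0) + (if j = Suc i then g j else 0)
        + (if j = i then V (Suc i) * g j else 0))"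
    using assms unfolding path_ham_def path_adj_def
    by (auto simp: scalar_prod_def intro!: sum.cong)
  also have "\<dots> = (if i = 0 then 0 else g (i-1)) + (if Suc i < N then g (Suc i) else 0) + V (Suc i) * g i"
    using assms by (simp add: sum.distrib sum.delta)
  finally show ?thesis .
qed

definition EQ :: "nat \<Rightarrow> (nat \<Rightarrow> real) \<Rightarrow> (nat \<Rightarrow> real) \<Rightarrow> real \<Rightarrow> bool" where
  "EQ N V g t = (\<forall>i<N. (if i = 0 then 0 else g (i-1)) + (if Suc i < N then g (Suc i) else 0) + V (Suc i) * g i = t * g i)"

lemma eig:
  assumes "0 < N" "EQ N V g t" "g 0 \<noteq> 0"
  shows "eigenvector (path_ham N V) (vec N g) t"
proof -
  have dim: "dim_row (path_ham N V) = N" by (simp add: path_ham_def path_adj_def)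
  have "path_ham N V *\<^sub>v vec N g = t \<cdot>\<^sub>v vec N g"
  proof (rule eq_vecI)
    fix i assume "i < dim_vec (t \<cdot>\<^sub>v vec N g)"
    then have i: "i < N" by simp
    show "(path_ham N V *\<^sub>v vec N g) $ i = (t \<cdot>\<^sub>v vec N g) $ i"
      unfolding path_ham_mult[OF i] using assms(2) i unfolding EQ_def by auto
  qed (simp add: dim)
  moreover have "vec N g \<noteq> 0\<^sub>v N"
  proof
    assume "vec N g = 0\<^sub>v N"
    then have "vec N g $ 0 = 0\<^sub>v N $ 0" by simp
    with assms show False by simp
  qed
  ultimately show ?thesis unfolding eigenvector_def dim by simp
qed


lemma even_EQ:
  fixes r :: "nat \<Rightarrow> real"
  assumes r0: "r 0 = 0" and rec: "\<And>k. r (Suc (Suc k)) = (t - Q (Suc k)) * r (Suc k) - r k"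
    and s: "s * s = 1" and key: "s * r n = r (Suc n)" and n: "1 \<le> n"
    and g_def: "g = (\<lambda>i. if i < n then r (Suc i) else s * r (2*n - i))"
  shows "EQ (2*n) (\<lambda>k. Q (min k (2*n+1-k))) g t"
  unfolding EQ_def
proof (intro allI impI)
  fix i assume i: "i < 2*n"
  have A: "(if i = 0 then 0 else g (i-1)) = (if i \<le> n then r i else s * r (2*n - i + 1))"
    using r0 i by (auto simp: g_def Suc_diff_le)
  have B: "(if Suc i < 2*n then g (Suc i) else 0) = (if Suc i < n then r (i+2) else s * r (2*n - i - 1))"
    using r0 i by (auto simp: g_def)
  consider "Suc i < n" | "Suc i = n" | "i = n" | "n < i" using i by linarith
  then show "(if i = 0 then 0 else g (i-1))
        + (if Suc i < 2*n then g (Suc i) else 0)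
        + Q (min (Suc i) (2*n+1-Suc i)) * g i = t * g i"
  proof cases
    case 1
    have "min (Suc i) (2*n+1-Suc i) = Suc i" using 1 by simp
    then show ?thesis unfolding A B using 1 rec[of i] by (simp add: g_def algebra_simps)
  next
    case 2
    have m: "min (Suc i) (2*n+1-Suc i) = n" using 2 by simp
    have e: "2*n - i - 1 = n" using 2 by simp
    obtain j where j: "n = Suc j" "i = j" using 2 by auto
    show ?thesis unfolding A B using rec[of j] key unfolding m e by (simp add: g_def j algebra_simps)
  next
    case 3
    have m: "min (Suc i) (2*n+1-Suc i) = n" using 3 by simp
    have e: "2*n - i - 1 = n - 1" "2*n - i = n" using 3 by auto
    obtain j where j: "n = Suc j" using n by (cases n) auto
    have "s * r (Suc n) = s * s * r n" using key by simp
    then have k2: "s * r (Suc n) = r n" using s by simp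
    have h: "s * (r j + r (Suc (Suc j)) + Q (Suc j) * r (Suc j)) = s * (t * r (Suc j))"
      using rec[of j] by (simp add: algebra_simps)
    have h2: "s * r j + s * r (Suc (Suc j)) + s * (Q (Suc j) * r (Suc j)) = s * (t * r (Suc j))"
      using h by (simp only: distrib_left)
    show ?thesis unfolding A B using h2 k2 unfolding m e by (simp add: g_def j 3 algebra_simps)
  next
    case 4
    define j where "j = 2*n - i - 1"
    have m: "min (Suc i) (2*n+1-Suc i) = Suc j" using 4 i by (simp add: j_def)
    have e: "2*n - i + 1 = Suc (Suc j)" "2*n - i = Suc j" using 4 i by (auto simp: j_def)
    have "r (Suc (Suc j)) + r j + Q (Suc j) * r (Suc j) = t * r (Suc j)" using rec[of j] by (simp add: algebra_simps)
    then have "s * r (Suc (Suc j)) + s * r j + Q (Suc j) * (s * r (Suc j)) = t * (s * r (Suc j))"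
      by (metis (no_types) distrib_left mult.left_commute)
    moreover have gi: "g i = s * r (Suc j)" using 4 e by (simp add: g_def)
    ultimately show ?thesis unfolding A B gi using 4 unfolding m e j_def[symmetric] by simp
  qed
qed

lemma odd_EQ:
  fixes r :: "nat \<Rightarrow> real"
  assumes r0: "r 0 = 0" and rec: "\<And>k. r (Suc (Suc k)) = (t - Q (Suc k)) * r (Suc k) - r k"
    and key: "s * r n = r (Suc (Suc n))" and key2: "s * r (Suc n) = r (Suc n)"
    and g_def: "g = (\<lambda>i. if i < Suc n then r (Suc i) else s * r (2*n+1 - i))"
  shows "EQ (2*n+1) (\<lambda>k. Q (min k (2*n+1+1-k))) g t"
  unfolding EQ_def
proof (intro allI impI)
  fix i assume i: "i < 2*n+1"
  have A: "(if i = 0 then 0 else g (i-1)) = (if i \<le> Suc n then r i else s * r (2*n+2 - i))"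
    using r0 i by (auto simp: g_def Suc_diff_le)
  have B: "(if Suc i < 2*n+1 then g (Suc i) else 0) = (if i < n then r (i+2) else s * r (2*n - i))"
    using r0 i by (auto simp: g_def)
  consider "i < n" | "i = n" | "i = Suc n" | "Suc n < i" using i by linarith
  then show "(if i = 0 then 0 else g (i-1))
        + (if Suc i < 2*n+1 then g (Suc i) else 0)
        + Q (min (Suc i) (2*n+1+1-Suc i)) * g i = t * g i"
  proof cases
    case 1
    have m: "min (Suc i) (2*n+1+1-Suc i) = Suc i" using 1 by simp
    have gi: "g i = r (Suc i)" using 1 by (simp add: g_def)
    show ?thesis unfolding A B gi m using 1 rec[of i] by (simp add: algebra_simps)
  next
    case 2
    have m: "min (Suc i) (2*n+1+1-Suc i) = Suc n" using 2 by simp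
    have gi: "g i = r (Suc n)" using 2 by (simp add: g_def)
    have e: "2*n - i = n" using 2 by simp
    show ?thesis unfolding A B gi m e using 2 rec[of n] key by (simp add: algebra_simps)
  next
    case 3
    obtain j where j: "n = Suc j" using 3 i by (cases n) auto
    have m: "min (Suc i) (2*n+1+1-Suc i) = n" using 3 by simp
    have gi: "g i = s * r n" using 3 by (simp add: g_def)
    have e: "2*n - i = j" using 3 j by simp
    have h: "s * r (Suc n) = s * ((t - Q n) * r n - r j)" using rec[of j] j by simp
    have h2: "s * r (Suc n) = t * (s * r n) - Q n * (s * r n) - s * r j"
      using h by (simp add: algebra_simps)
    show ?thesis unfolding A B gi m e using 3 h2 key2 by (simp add: algebra_simps)
  next
    case 4
    define j where "j = 2*n - i"
    have m: "min (Suc i) (2*n+1+1-Suc i) = Suc j" using 4 i by (simp add: j_def)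
    have e: "2*n+2 - i = Suc (Suc j)" "2*n+1 - i = Suc j" using 4 i by (auto simp: j_def)
    have "r (Suc (Suc j)) + r j + Q (Suc j) * r (Suc j) = t * r (Suc j)" using rec[of j] by (simp add: algebra_simps)
    then have "s * r (Suc (Suc j)) + s * r j + Q (Suc j) * (s * r (Suc j)) = t * (s * r (Suc j))"
      by (metis (no_types) distrib_left mult.left_commute)
    moreover have gi: "g i = s * r (Suc j)" using 4 e by (simp add: g_def)
    ultimately show ?thesis unfolding A B gi using 4 unfolding m e j_def[symmetric] by simp
  qed
qed


lemma pp: "path_poly Q (int k) = cont (\<lambda>i. [:- Q (Suc i), 1:]) 0 k"
  by (simp add: path_poly_def char_poly_path)

lemma pm: "path_poly Q (int k - 1) = (if k = 0 then 0 else cont (\<lambda>i. [:- Q (Suc i), 1:]) 0 (k - 1))"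
proof (cases k)
  case (Suc j)
  then have "int k - 1 = int j" by simp
  then show ?thesis using Suc by (simp only: pp) simp
qed (simp add: path_poly_def)

lemma pm2: "path_poly Q (int k - 2) = (if k \<le> 1 then (if k = 1 then 0 else path_poly Q (-2)) else cont (\<lambda>i. [:- Q (Suc i), 1:]) 0 (k - 2))"
proof (cases "k \<le> 1")
  case False
  then have "int k - 2 = int (k - 2)" by simp
  then show ?thesis using False by (simp only: pp) simp
qed (auto simp: path_poly_def)

lemma pp1: "path_poly Q (int n + 1) = path_poly Q (int (Suc n))" by (simp add: add.commute)

lemma part1: "n \<ge> 1 \<Longrightarrow>
   path_poly Q (int n) = [:- Q n, 1:] * path_poly Q (int n - 1) - path_poly Q (int n - 2)"
proof -
  assume n: "n \<ge> 1"
  show ?thesis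
  proof (cases "n = 1")
    case True
    have a: "path_poly Q (int 1) = [:- Q 1, 1:]" by (simp only: pp) simp
    have b: "path_poly Q (int 0) = 1" by (simp only: pp) simp
    have c: "path_poly Q (-1) = 0" by (simp add: path_poly_def)
    show ?thesis using True a b c by simp
  next
    case False
    then obtain k where k: "n = Suc (Suc k)" using n by (cases n; cases "n - 1") auto
    show ?thesis unfolding pp pm pm2 using k by simp
  qed
qed

lemma even_cp:
  assumes n: "n \<ge> 1"
  shows "char_poly (sym_ham (2*n) Q)
     = (path_poly Q (int n) + path_poly Q (int n - 1)) * (path_poly Q (int n) - path_poly Q (int n - 1))"
proof -
  define dV where "dV = (\<lambda>i. [:- Q (min (Suc i) (2*n+1-Suc i)), 1:])"
  define dQ where "dQ = (\<lambda>i::nat. [:- Q (Suc i), 1:])"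
  obtain m where m: "n = Suc m" using n by (cases n) auto
  have cp0: "char_poly (sym_ham (2*n) Q) = cont dV 0 (2*n)"
    unfolding sym_ham_def char_poly_path dV_def by (simp del: cont.simps)
  have "2*n = n + Suc m" using m by simp
  then have cp: "char_poly (sym_ham (2*n) Q) = cont dV 0 (n + Suc m)" using cp0 by (simp only:)
  have sp: "cont dV 0 (n + Suc m) = cont dV 0 n * cont dV n (Suc m) - cont dV 0 (n-1) * cont dV (n+1) m"
    using cont_split[of n dV 0 m] m by simp
  have c1: "cont dV 0 n = cont dQ 0 n" by (rule cont_cong) (auto simp: dV_def dQ_def)
  have c2: "cont dV 0 m = cont dQ 0 m" by (rule cont_cong) (auto simp: dV_def dQ_def m)
  have c3: "cont dV n (Suc m) = cont dQ 0 (Suc m)"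
  proof -
    have "cont dV n (Suc m) = cont (\<lambda>i. dV (2*n-1 - i)) (Suc (2*n-1) - (n + Suc m)) (Suc m)"
      by (rule cont_rev) (use m in simp)
    also have "Suc (2*n-1) - (n + Suc m) = 0" using m by simp
    also have "cont (\<lambda>i. dV (2*n-1 - i)) 0 (Suc m) = cont dQ 0 (Suc m)"
      by (rule cont_cong) (auto simp: dV_def dQ_def m)
    finally show ?thesis .
  qed
  have c4: "cont dV (n+1) m = cont dQ 0 m"
  proof -
    have "cont dV (n+1) m = cont (\<lambda>i. dV (2*n-1 - i)) (Suc (2*n-1) - (n + 1 + m)) m"
      by (rule cont_rev) (use m in simp)
    also have "Suc (2*n-1) - (n + 1 + m) = 0" using m by simp
    also have "cont (\<lambda>i. dV (2*n-1 - i)) 0 m = cont dQ 0 m"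
      by (rule cont_cong) (auto simp: dV_def dQ_def m)
    finally show ?thesis .
  qed
  have P1: "path_poly Q (int n) = cont dQ 0 n" unfolding pp dQ_def ..
  have P2: "path_poly Q (int n - 1) = cont dQ 0 m" unfolding pm dQ_def using m by simp
  show ?thesis unfolding cp sp P1 P2 c1 using c2 c3 c4 m
    by (simp add: algebra_simps del: cont.simps)
qed

lemma odd_cp:
  shows "char_poly (sym_ham (2*n+1) Q)
     = path_poly Q (int n) * (path_poly Q (int n + 1) - path_poly Q (int n - 1))"
proof -
  define dV where "dV = (\<lambda>i. [:- Q (min (Suc i) (2*n+1+1-Suc i)), 1:])"
  define dQ where "dQ = (\<lambda>i::nat. [:- Q (Suc i), 1:])"
  have cp: "char_poly (sym_ham (2*n+1) Q) = cont dV 0 (2*n+1)"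
    unfolding sym_ham_def char_poly_path dV_def by (simp del: cont.simps)
  have P1: "path_poly Q (int n) = cont dQ 0 n" unfolding pp dQ_def ..
  have P3: "path_poly Q (int n + 1) = cont dQ 0 (Suc n)" unfolding pp1 pp dQ_def ..
  show ?thesis
  proof (cases n)
    case 0
    have "path_poly Q (int n - 1) = 0" using 0 by (simp add: path_poly_def)
    then show ?thesis unfolding cp P1 P3 using 0 by (simp add: dV_def dQ_def)
  next
    case (Suc m)
    have P2: "path_poly Q (int n - 1) = cont dQ 0 m" unfolding pm dQ_def using Suc by simp
    have sp: "cont dV 0 (Suc n + Suc m) = cont dV 0 (Suc n) * cont dV (Suc n) (Suc m) - cont dV 0 n * cont dV (n+2) m"
      using cont_split[of "Suc n" dV 0 m] by simp
    have e: "2*n+1 = Suc n + Suc m" using Suc by simp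
    have c1: "cont dV 0 (Suc n) = cont dQ 0 (Suc n)" by (rule cont_cong) (auto simp: dV_def dQ_def)
    have c2: "cont dV 0 n = cont dQ 0 n" by (rule cont_cong) (auto simp: dV_def dQ_def)
    have c3: "cont dV (Suc n) (Suc m) = cont dQ 0 n"
    proof -
      have "cont dV (Suc n) (Suc m) = cont (\<lambda>i. dV (2*n - i)) (Suc (2*n) - (Suc n + Suc m)) (Suc m)"
        by (rule cont_rev) (use Suc in simp)
      also have "Suc (2*n) - (Suc n + Suc m) = 0" using Suc by simp
      also have "cont (\<lambda>i. dV (2*n - i)) 0 (Suc m) = cont dQ 0 (Suc m)"
        by (rule cont_cong) (auto simp: dV_def dQ_def Suc)
      finally show ?thesis using Suc by simp
    qed
    have c4: "cont dV (n+2) m = cont dQ 0 m"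
    proof -
      have "cont dV (n+2) m = cont (\<lambda>i. dV (2*n - i)) (Suc (2*n) - (n + 2 + m)) m"
        by (rule cont_rev) (use Suc in simp)
      also have "Suc (2*n) - (n + 2 + m) = 0" using Suc by simp
      also have "cont (\<lambda>i. dV (2*n - i)) 0 m = cont dQ 0 m"
        by (rule cont_cong) (auto simp: dV_def dQ_def Suc)
      finally show ?thesis .
    qed
    show ?thesis unfolding cp unfolding e sp P1 P2 P3 c1 c2 c3 c4
      by (simp add: algebra_simps del: cont.simps)
  qed
qed


definition rr :: "(nat \<Rightarrow> real) \<Rightarrow> real \<Rightarrow> nat \<Rightarrow> real" where
  "rr Q t k = poly (path_poly Q (int k - 1)) t"

lemma rr0: "rr Q t 0 = 0" by (simp add: rr_def path_poly_def)

lemma rrS: "rr Q t (Suc k) = poly (path_poly Q (int k)) t"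
proof -
  have "int (Suc k) - 1 = int k" by simp
  then show ?thesis unfolding rr_def by (simp only:)
qed

lemma rr1: "rr Q t 1 = 1"
proof -
  have "rr Q t 1 = poly (path_poly Q (int 0)) t" using rrS[of Q t 0] by simp
  also have "path_poly Q (int 0) = 1" by (simp only: pp) simp
  finally show ?thesis by simp
qed

lemma rr_rec: "rr Q t (Suc (Suc k)) = (t - Q (Suc k)) * rr Q t (Suc k) - rr Q t k"
proof -
  have h: "path_poly Q (int (Suc k)) = [:- Q (Suc k), 1:] * path_poly Q (int (Suc k) - 1) - path_poly Q (int (Suc k) - 2)"
    by (rule part1) simp
  have e1: "int (Suc k) - 1 = int k" by simp
  have e2: "int (Suc k) - 2 = int k - 1" by simp
  have "poly (path_poly Q (int (Suc k))) t = (t - Q (Suc k)) * poly (path_poly Q (int k)) t - poly (path_poly Q (int k - 1)) t"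
    unfolding h e1 e2 by (simp add: algebra_simps)
  then show ?thesis unfolding rrS by (simp add: rr_def)
qed

lemma even_gen:
  assumes n: "n \<ge> 1" and s: "s * s = 1" and key: "s * rr Q t n = rr Q t (Suc n)"
  shows "\<exists>f. eigenvector (sym_ham (2*n) Q) f t \<and> f $ 0 = s * f $ (2*n - 1) \<and> f $ 0 \<noteq> 0"
proof -
  define g where "g = (\<lambda>i. if i < n then rr Q t (Suc i) else s * rr Q t (2*n - i))"
  have E: "EQ (2*n) (\<lambda>k. Q (min k (2*n+1-k))) g t"
    by (rule even_EQ[OF rr0 rr_rec s key n g_def])
  have g0: "g 0 = 1" using n rr1 by (simp add: g_def)
  have gN: "g (2*n-1) = s" using n rr1 by (simp add: g_def)
  have ev: "eigenvector (sym_ham (2*n) Q) (vec (2*n) g) t"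
    unfolding sym_ham_def by (rule eig) (use n E g0 in auto)
  show ?thesis
    by (rule exI[of _ "vec (2*n) g"]) (use ev n g0 gN s in auto)
qed

lemma odd_gen:
  assumes key: "s * rr Q t n = rr Q t (Suc (Suc n))" and key2: "s * rr Q t (Suc n) = rr Q t (Suc n)"
  shows "\<exists>f. eigenvector (sym_ham (2*n+1) Q) f t \<and> f $ 0 = 1 \<and> f $ (2*n) = (if n = 0 then 1 else s)"
proof -
  define g where "g = (\<lambda>i. if i < Suc n then rr Q t (Suc i) else s * rr Q t (2*n+1 - i))"
  have E: "EQ (2*n+1) (\<lambda>k. Q (min k (2*n+1+1-k))) g t"
    by (rule odd_EQ[OF rr0 rr_rec key key2 g_def])
  have g0: "g 0 = 1" using rr1 by (simp add: g_def)
  have gN: "g (2*n) = (if n = 0 then 1 else s)" using rr1 by (simp add: g_def)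
  have ev: "eigenvector (sym_ham (2*n+1) Q) (vec (2*n+1) g) t"
    unfolding sym_ham_def by (rule eig) (use E g0 in auto)
  show ?thesis
    by (rule exI[of _ "vec (2*n+1) g"]) (use ev g0 gN in auto)
qed


theorem lemma2:
  fixes Q :: "nat \<Rightarrow> real"
  shows
   "(\<forall>n::nat. n \<ge> 1 \<longrightarrow>
        path_poly Q (int n) = [:- Q n, 1:] * path_poly Q (int n - 1) - path_poly Q (int n - 2))
  \<and> (\<forall>n::nat. n \<ge> 1 \<longrightarrow>
        char_poly (sym_ham (2*n) Q)
          = (path_poly Q (int n) + path_poly Q (int n - 1)) * (path_poly Q (int n) - path_poly Q (int n - 1))
      \<and> (\<forall>t. poly (path_poly Q (int n) + path_poly Q (int n - 1)) t = 0 \<longrightarrow>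
            (\<exists>f. eigenvector (sym_ham (2*n) Q) f t \<and> f $ 0 = - (f $ (2*n - 1)) \<and> f $ 0 \<noteq> 0))
      \<and> (\<forall>t. poly (path_poly Q (int n) - path_poly Q (int n - 1)) t = 0 \<longrightarrow>
            (\<exists>f. eigenvector (sym_ham (2*n) Q) f t \<and> f $ 0 = f $ (2*n - 1) \<and> f $ 0 \<noteq> 0)))
  \<and> (\<forall>n::nat.
        char_poly (sym_ham (2*n+1) Q)
          = path_poly Q (int n) * (path_poly Q (int n + 1) - path_poly Q (int n - 1))
      \<and> (\<forall>t. poly (path_poly Q (int n)) t = 0 \<longrightarrow>
            (\<exists>f. eigenvector (sym_ham (2*n+1) Q) f t \<and> f $ 0 = - (f $ (2*n)) \<and> f $ 0 \<noteq> 0))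
      \<and> (\<forall>t. poly (path_poly Q (int n + 1) - path_poly Q (int n - 1)) t = 0 \<longrightarrow>
            (\<exists>f. eigenvector (sym_ham (2*n+1) Q) f t \<and> f $ 0 = f $ (2*n) \<and> f $ 0 \<noteq> 0)))"
proof (intro conjI allI impI)
  fix n :: nat assume "n \<ge> 1"
  then show "path_poly Q (int n) = [:- Q n, 1:] * path_poly Q (int n - 1) - path_poly Q (int n - 2)"
    by (rule part1)
next
  fix n :: nat assume "n \<ge> 1"
  then show "char_poly (sym_ham (2*n) Q)
          = (path_poly Q (int n) + path_poly Q (int n - 1)) * (path_poly Q (int n) - path_poly Q (int n - 1))"
    by (rule even_cp)
next
  fix n :: nat and t assume n: "n \<ge> 1" and z: "poly (path_poly Q (int n) + path_poly Q (int n - 1)) t = 0"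
  have "rr Q t (Suc n) + rr Q t n = 0" using z by (simp add: rrS rr_def)
  then have "(-1) * rr Q t n = rr Q t (Suc n)" by simp
  from even_gen[OF n _ this] obtain f where
    "eigenvector (sym_ham (2*n) Q) f t" "f $ 0 = -1 * f $ (2*n - 1)" "f $ 0 \<noteq> 0" by auto
  then show "\<exists>f. eigenvector (sym_ham (2*n) Q) f t \<and> f $ 0 = - (f $ (2*n - 1)) \<and> f $ 0 \<noteq> 0" by auto
next
  fix n :: nat and t assume n: "n \<ge> 1" and z: "poly (path_poly Q (int n) - path_poly Q (int n - 1)) t = 0"
  have "rr Q t (Suc n) - rr Q t n = 0" using z by (simp add: rrS rr_def)
  then have "1 * rr Q t n = rr Q t (Suc n)" by simp
  from even_gen[OF n _ this] obtain f where
    "eigenvector (sym_ham (2*n) Q) f t" "f $ 0 = 1 * f $ (2*n - 1)" "f $ 0 \<noteq> 0" by auto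
  then show "\<exists>f. eigenvector (sym_ham (2*n) Q) f t \<and> f $ 0 = f $ (2*n - 1) \<and> f $ 0 \<noteq> 0" by auto
next
  fix n :: nat
  show "char_poly (sym_ham (2*n+1) Q)
          = path_poly Q (int n) * (path_poly Q (int n + 1) - path_poly Q (int n - 1))"
    by (rule odd_cp)
next
  fix n :: nat and t assume z: "poly (path_poly Q (int n)) t = 0"
  have z': "rr Q t (Suc n) = 0" using z by (simp add: rrS)
  have n: "n \<noteq> 0"
  proof
    assume "n = 0"
    then show False using z' rr1[of Q t] by simp
  qed
  have k: "(-1) * rr Q t n = rr Q t (Suc (Suc n))" using rr_rec[of Q t n] z' by simp
  have k2: "(-1) * rr Q t (Suc n) = rr Q t (Suc n)" using z' by simp
  from odd_gen[OF k k2] n obtain f where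
    "eigenvector (sym_ham (2*n+1) Q) f t" "f $ 0 = 1" "f $ (2*n) = -1" by auto
  then show "\<exists>f. eigenvector (sym_ham (2*n+1) Q) f t \<and> f $ 0 = - (f $ (2*n)) \<and> f $ 0 \<noteq> 0" by auto
next
  fix n :: nat and t assume z: "poly (path_poly Q (int n + 1) - path_poly Q (int n - 1)) t = 0"
  have "rr Q t (Suc (Suc n)) - rr Q t n = 0" using z unfolding pp1 by (simp add: rrS rr_def)
  then have k: "1 * rr Q t n = rr Q t (Suc (Suc n))" by simp
  have k2: "1 * rr Q t (Suc n) = rr Q t (Suc n)" by simp
  from odd_gen[OF k k2] obtain f where
    "eigenvector (sym_ham (2*n+1) Q) f t" "f $ 0 = 1" "f $ (2*n) = 1" by (auto split: if_splits)
  then show "\<exists>f. eigenvector (sym_ham (2*n+1) Q) f t \<and> f $ 0 = f $ (2*n) \<and> f $ 0 \<noteq> 0" by auto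
qed

end
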